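(* Let $X_1,\dots,X_t$ be independent symmetric real random variables, and suppose that for some $x>0$ and $p>0$ we have $\Pr[|X_i|<x]>p$ for all $i\in[t]$. Then \[ \Pr\left[\left|\operatorname{median}_{i\in[t]} X_i\right|\ge x\right] < 2e^{-tp^2/2}. \]
   Context: A real random variable $Y$ is symmetric if $Y$ and $-Y$ have the same distribution. For even $t$ the median is the average of the two middle values. *)

theory Defs
  imports "HOL-Probability.Probability"
begin

definition median_list :: "real list \<Rightarrow> real" where
  "median_list xs = (let ys = sort xs; n = length xs in
     if odd n then ys ! (n div 2)
     else (ys ! (n div 2 - 1) + ys ! (n div 2)) / 2)"

definition symmetric_rv :: "'a measure \<Rightarrow> ('a \<Rightarrow> real) \<Rightarrow> bool" where
  "symmetric_rv M Y \<longleftrightarrow> distr M borel Y = distr M borel (\<lambda>\<omega>. - Y \<omega>)"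

end

theory Submission
  imports Defs
begin
lemma median_bound:
  fixes xs :: "real list" and x :: real
  assumes ne: "xs \<noteq> []" and x: "x > 0" and m: "\<bar>median_list xs\<bar> \<ge> x"
  shows "length xs \<le> 2 * length (filter (\<lambda>v. x \<le> v) xs) \<or> length xs \<le> 2 * length (filter (\<lambda>v. v \<le> -x) xs)"
proof -
  define ys where "ys = sort xs"
  define n where "n = length xs"
  have sy: "sorted ys" and ly: "length ys = n" unfolding ys_def n_def by auto
  have n0: "n > 0" using ne n_def by auto
  have fl: "\<And>P. length (filter P xs) = card {j. j < n \<and> P (ys ! j)}"
    by (metis filter_sort length_sort length_filter_conv_card ly ys_def)
  have med: "median_list xs = (if odd n then ys ! (n div 2) else (ys ! (n div 2 - 1) + ys ! (n div 2)) / 2)"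
    unfolding median_list_def ys_def n_def Let_def by simp
  have ab: "ys ! (n div 2 - 1) \<le> ys ! (n div 2)" using sy ly n0
    by (intro sorted_nth_mono) auto
  show ?thesis
  proof (cases "median_list xs \<ge> x")
    case True
    have b: "ys ! (n div 2) \<ge> x" using True med ab by (auto split: if_splits)
    have "{j. n div 2 \<le> j \<and> j < n} \<subseteq> {j. j < n \<and> x \<le> ys ! j}"
    proof
      fix j assume "j \<in> {j. n div 2 \<le> j \<and> j < n}"
      then have "ys ! (n div 2) \<le> ys ! j" using sy ly by (intro sorted_nth_mono) auto
      then show "j \<in> {j. j < n \<and> x \<le> ys ! j}" using b \<open>j \<in> _\<close> by auto
    qed
    then have "card {j. n div 2 \<le> j \<and> j < n} \<le> card {j. j < n \<and> x \<le> ys ! j}"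
      by (intro card_mono) auto
    moreover have "{j. n div 2 \<le> j \<and> j < n} = {n div 2..<n}" by auto
    ultimately have "n - n div 2 \<le> length (filter (\<lambda>v. x \<le> v) xs)" using fl by simp
    then show ?thesis unfolding n_def by auto
  next
    case False
    then have le: "median_list xs \<le> -x" using m by auto
    have b: "ys ! ((n - 1) div 2) \<le> -x"
    proof (cases "odd n")
      case True
      then have "(n-1) div 2 = n div 2" by presburger
      then show ?thesis using le med True by simp
    next
      case False
      then have "(n-1) div 2 = n div 2 - 1" using n0 by presburger
      then show ?thesis using le med False ab by simp
    qed
    have "{j. j \<le> (n-1) div 2} \<subseteq> {j. j < n \<and> ys ! j \<le> -x}"
    proof
      fix j assume "j \<in> {j. j \<le> (n-1) div 2}"
      moreover have "(n-1) div 2 < n" using n0 by auto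
      ultimately have "ys ! j \<le> ys ! ((n-1) div 2)" "j < n" using sy ly by (auto intro: sorted_nth_mono)
      then show "j \<in> {j. j < n \<and> ys ! j \<le> -x}" using b by auto
    qed
    then have "card {j. j \<le> (n-1) div 2} \<le> card {j. j < n \<and> ys ! j \<le> -x}"
      by (intro card_mono) auto
    moreover have "{j. j \<le> (n-1) div 2} = {..(n-1) div 2}" by auto
    ultimately have "(n-1) div 2 + 1 \<le> length (filter (\<lambda>v. v \<le> -x) xs)" using fl by simp
    then show ?thesis unfolding n_def by auto
  qed
qed

lemma (in prob_space) hoeff_count:
  fixes X :: "nat \<Rightarrow> 'a \<Rightarrow> real" and A :: "real set"
  assumes t: "t > 0" and Xm: "\<And>i. i\<in>{1..t} \<Longrightarrow> X i \<in> borel_measurable M"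
    and ind: "indep_vars (\<lambda>_. borel) X {1..t}" and A: "A \<in> sets borel" and p: "p > 0"
    and q: "\<And>i. i\<in>{1..t} \<Longrightarrow> prob (X i -` A \<inter> space M) < (1-p)/2"
  shows "prob {\<omega>\<in>space M. real t \<le> 2 * (\<Sum>i\<in>{1..t}. indicator A (X i \<omega>))} < exp (- real t * p\<^sup>2 / 2)"
proof -
  define Y where "Y i \<omega> = (indicator A (X i \<omega>) :: real)" for i \<omega>
  define \<mu> where "\<mu> = (\<Sum>i\<in>{1..t}. prob (X i -` A \<inter> space M))"
  have E: "expectation (Y i) = prob (X i -` A \<inter> space M)" if i: "i \<in> {1..t}" for i
  proof -
    have s: "X i -` A \<inter> space M \<in> sets M" using measurable_sets[OF Xm[OF i] A] .
    have "expectation (Y i) = expectation (indicator (X i -` A \<inter> space M))"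
      by (intro Bochner_Integration.integral_cong) (auto simp: Y_def indicator_def)
    also have "\<dots> = prob (X i -` A \<inter> space M)" using s by simp
    finally show ?thesis .
  qed
  interpret H: Hoeffding_ineq M "{1..t}" Y "\<lambda>_. 0" "\<lambda>_. 1" \<mu>
  proof unfold_locales
    show "finite {1..t}" by simp
    show "indep_vars (\<lambda>_. borel) Y {1..t}"
      unfolding Y_def using ind by (rule indep_vars_compose2) (use A in auto)
    show "AE x in M. Y i x \<in> {0..1}" if "i \<in> {1..t}" for i
      by (intro AE_I2) (auto simp: Y_def indicator_def)
    show "\<mu> \<equiv> \<Sum>i\<in>{1..t}. expectation (Y i)"
      unfolding \<mu>_def by (intro eq_reflection sum.cong) (auto simp: E)
  qed
  have "\<mu> < (\<Sum>i\<in>{1..t}. (1-p)/2)"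
    unfolding \<mu>_def using t by (intro sum_strict_mono) (use q in auto)
  then have mu: "\<mu> < real t * (1-p)/2" by simp
  define \<epsilon> where "\<epsilon> = real t / 2 - \<mu>"
  have eps: "\<epsilon> > real t * p / 2" using mu unfolding \<epsilon>_def by (simp add: algebra_simps)
  have tp: "real t * p / 2 > 0" using t p by simp
  have "prob {\<omega>\<in>space M. (\<Sum>i\<in>{1..t}. Y i \<omega>) \<ge> \<mu> + \<epsilon>} \<le> exp (-2 * \<epsilon>\<^sup>2 / (\<Sum>i\<in>{1..t}. (1 - 0)\<^sup>2))"
    using eps tp t by (intro H.Hoeffding_ineq_ge) auto
  also have "\<dots> = exp (-2 * \<epsilon>\<^sup>2 / real t)" by simp
  also have "\<dots> < exp (- real t * p\<^sup>2 / 2)"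
  proof -
    have "(real t * p / 2)\<^sup>2 < \<epsilon>\<^sup>2" using eps tp by (intro power_strict_mono) auto
    then have "real t * p\<^sup>2 / 2 < 2 * \<epsilon>\<^sup>2 / real t" using t
      by (simp add: field_simps power2_eq_square)
    then show ?thesis by (simp add: field_simps)
  qed
  finally show ?thesis
    unfolding \<epsilon>_def Y_def by (simp add: mult.commute)
qed

lemma count_sum:
  fixes g :: "nat \<Rightarrow> real"
  shows "real (length (filter P (map g [1..<t+1]))) = (\<Sum>i\<in>{1..t}. indicator {v. P v} (g i))"
proof -
  have "length (filter P (map g [1..<t+1])) = card {i\<in>{1..t}. P (g i)}"
  proof -
    have "length (filter P (map g [1..<t+1])) = card ({i. P (g i)} \<inter> set [1..<t+1])"
      by (simp add: filter_map distinct_length_filter comp_def)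
    also have "{i. P (g i)} \<inter> set [1..<t+1] = {i\<in>{1..t}. P (g i)}" by auto
    finally show ?thesis .
  qed
  moreover have "(\<Sum>i\<in>{1..t}. indicator {v. P v} (g i) :: real) = real (card {i\<in>{1..t}. P (g i)})"
    by (simp add: indicator_def sum.If_cases Int_def conj_commute)
  ultimately show ?thesis by simp
qed

theorem lemma3p3:
  fixes M :: "'a measure" and X :: "nat \<Rightarrow> 'a \<Rightarrow> real"
    and t :: nat and x p :: real
  assumes "prob_space M"
    and "\<And>i. i \<in> {1..t} \<Longrightarrow> X i \<in> borel_measurable M"
    and "prob_space.indep_vars M (\<lambda>_. borel) X {1..t}"
    and "\<And>i. i \<in> {1..t} \<Longrightarrow> symmetric_rv M (X i)"
    and "x > 0" and "p > 0"
    and "\<And>i. i \<in> {1..t} \<Longrightarrow> measure M {\<omega> \<in> space M. \<bar>X i \<omega>\<bar> < x} > p"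
  shows "measure M {\<omega> \<in> space M. \<bar>median_list (map (\<lambda>i. X i \<omega>) [1..<t+1])\<bar> \<ge> x}
           < 2 * exp (- real t * p\<^sup>2 / 2)"
proof -
  interpret prob_space M by fact
  note Xm = assms(2)
  show ?thesis
  proof (cases "t = 0")
    case True
    have "prob {\<omega> \<in> space M. \<bar>median_list (map (\<lambda>i. X i \<omega>) [1..<t+1])\<bar> \<ge> x} \<le> 1"
      by (rule prob_le_1)
    moreover have "2 * exp (- real t * p\<^sup>2 / 2) = 2" using True by simp
    ultimately show ?thesis by linarith
  next
    case False
    then have t: "t > 0" by simp
    have q: "prob (X i -` {x..} \<inter> space M) < (1-p)/2"
      and q2: "prob (X i -` {..-x} \<inter> space M) < (1-p)/2" if i: "i \<in> {1..t}" for i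
    proof -
      have m1: "X i \<in> borel_measurable M" using Xm[OF i] .
      have m2: "(\<lambda>\<omega>. - X i \<omega>) \<in> borel_measurable M" using m1 by measurable
      have "measure (distr M borel (X i)) {x..} = measure (distr M borel (\<lambda>\<omega>. - X i \<omega>)) {x..}"
        using assms(4)[OF i] unfolding symmetric_rv_def by simp
      then have "prob (X i -` {x..} \<inter> space M) = prob ((\<lambda>\<omega>. - X i \<omega>) -` {x..} \<inter> space M)"
        using m1 m2 by (simp add: measure_distr)
      also have "(\<lambda>\<omega>. - X i \<omega>) -` {x..} \<inter> space M = X i -` {..-x} \<inter> space M" by auto
      finally have sy: "prob (X i -` {x..} \<inter> space M) = prob (X i -` {..-x} \<inter> space M)" .
      define S0 where "S0 = {\<omega> \<in> space M. \<bar>X i \<omega>\<bar> < x}"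
      define S1 where "S1 = X i -` {x..} \<inter> space M"
      define S2 where "S2 = X i -` {..-x} \<inter> space M"
      have s0: "S0 \<in> sets M" unfolding S0_def using m1 by measurable
      have s1: "S1 \<in> sets M" unfolding S1_def using measurable_sets[OF m1] by simp
      have s2: "S2 \<in> sets M" unfolding S2_def using measurable_sets[OF m1] by simp
      have "space M = S0 \<union> (S1 \<union> S2)" unfolding S0_def S1_def S2_def by auto
      then have "1 = prob (S0 \<union> (S1 \<union> S2))" using prob_space by simp
      also have "\<dots> = prob S0 + prob (S1 \<union> S2)"
        using s0 s1 s2 assms(5) by (intro finite_measure_Union) (auto simp: S0_def S1_def S2_def)
      also have "prob (S1 \<union> S2) = prob S1 + prob S2"
        using s0 s1 s2 assms(5) by (intro finite_measure_Union) (auto simp: S0_def S1_def S2_def)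
      finally have "1 = prob S0 + prob S1 + prob S2" by simp
      moreover have "prob S0 > p" using assms(7)[OF i] unfolding S0_def .
      ultimately show "prob (X i -` {x..} \<inter> space M) < (1-p)/2"
        and "prob (X i -` {..-x} \<inter> space M) < (1-p)/2"
        using sy unfolding S1_def S2_def by auto
    qed
    have ind: "indep_vars (\<lambda>_. borel) X {1..t}" using assms(3) .
    have H1: "prob {\<omega>\<in>space M. real t \<le> 2 * (\<Sum>i\<in>{1..t}. indicator {x..} (X i \<omega>))} < exp (- real t * p\<^sup>2 / 2)"
      by (rule hoeff_count[OF t Xm ind _ assms(6) q]) auto
    have H2: "prob {\<omega>\<in>space M. real t \<le> 2 * (\<Sum>i\<in>{1..t}. indicator {..-x} (X i \<omega>))} < exp (- real t * p\<^sup>2 / 2)"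
      by (rule hoeff_count[OF t Xm ind _ assms(6) q2]) auto
    define T1 where "T1 = {\<omega>\<in>space M. real t \<le> 2 * (\<Sum>i\<in>{1..t}. indicator {x..} (X i \<omega>))}"
    define T2 where "T2 = {\<omega>\<in>space M. real t \<le> 2 * (\<Sum>i\<in>{1..t}. indicator {..-x} (X i \<omega>) :: real)}"
    have f1: "(\<lambda>\<omega>. \<Sum>i\<in>{1..t}. indicator {x..} (X i \<omega>) :: real) \<in> borel_measurable M"
      by (intro borel_measurable_sum measurable_compose[OF Xm borel_measurable_indicator]) auto
    have f2: "(\<lambda>\<omega>. \<Sum>i\<in>{1..t}. indicator {..-x} (X i \<omega>) :: real) \<in> borel_measurable M"
      by (intro borel_measurable_sum measurable_compose[OF Xm borel_measurable_indicator]) auto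
    have T1s: "T1 \<in> sets M" unfolding T1_def using f1 by measurable
    have T2s: "T2 \<in> sets M" unfolding T2_def using f2 by measurable
    have sub: "{\<omega> \<in> space M. \<bar>median_list (map (\<lambda>i. X i \<omega>) [1..<t+1])\<bar> \<ge> x} \<subseteq> T1 \<union> T2"
    proof
      fix \<omega> assume "\<omega> \<in> {\<omega> \<in> space M. \<bar>median_list (map (\<lambda>i. X i \<omega>) [1..<t+1])\<bar> \<ge> x}"
      then have sp: "\<omega> \<in> space M" and m: "\<bar>median_list (map (\<lambda>i. X i \<omega>) [1..<t+1])\<bar> \<ge> x" by auto
      have ne: "map (\<lambda>i. X i \<omega>) [1..<t+1] \<noteq> []" using t by simp
      from median_bound[OF ne assms(5) m]
      have "real t \<le> 2 * real (length (filter (\<lambda>v. x \<le> v) (map (\<lambda>i. X i \<omega>) [1..<t+1])))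
          \<or> real t \<le> 2 * real (length (filter (\<lambda>v. v \<le> -x) (map (\<lambda>i. X i \<omega>) [1..<t+1])))"
        by (simp only: length_map length_upt) linarith
      then show "\<omega> \<in> T1 \<union> T2"
        unfolding T1_def T2_def count_sum using sp by (auto simp: atLeast_def atMost_def)
    qed
    have "prob {\<omega> \<in> space M. \<bar>median_list (map (\<lambda>i. X i \<omega>) [1..<t+1])\<bar> \<ge> x} \<le> prob (T1 \<union> T2)"
      using T1s T2s sub by (intro finite_measure_mono) auto
    also have "\<dots> \<le> prob T1 + prob T2" using T1s T2s by (rule measure_Un_le)
    also have "\<dots> < 2 * exp (- real t * p\<^sup>2 / 2)" using H1 H2 unfolding T1_def T2_def by simp
    finally show ?thesis .
  qed
qed
end
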